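(* Let $q$ be a prime power, $1\le k$, $k+1<n\le m$, let $g_1,\dots,g_n\in\mathbb{F}_{q^m}$ be linearly independent over $\mathbb{F}_q$, and let $\mathcal{G}$ be the Gabidulin code of dimension $k$ with respect to $g_1,\dots,g_n$. Let $f(x)=x^{q^{k+1}}-a_1x^{q^k}+\sum_{i=0}^{k-1}c_ix^{q^i}$ with $a_1,c_i\in\mathbb{F}_{q^m}$, and $\sigma_f=(f(g_1),\dots,f(g_n))$. Then $\sigma_f$ is not a deep hole of $\mathcal{G}$ in the Hamming metric (i.e. $d_H(\sigma_f,\mathcal{G})\neq n-k$) if and only if there exist $k+1$ distinct elements $g_{i_1},\dots,g_{i_{k+1}}$ of $\{g_1,\dots,g_n\}$ such that $$a_1=\frac{\det\mathcal{R}_k(g_{i_1},\dots,g_{i_{k+1}})}{\det M_{k+1}(g_{i_1},\dots,g_{i_{k+1}})}.$$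
   Context: For $\beta_1,\dots,\beta_s\in\mathbb{F}_{q^m}$, the $t\times s$ Moore matrix $M_t(\beta_1,\dots,\beta_s)$ has $(i,j)$ entry $\beta_j^{q^{i-1}}$, $1\le i\le t$. $\mathcal{R}_k(\beta_1,\dots,\beta_{k+1})$ is the $(k+1)\times(k+1)$ matrix obtained from $M_{k+2}(\beta_1,\dots,\beta_{k+1})$ by deleting the row $(\beta_1^{q^k},\dots,\beta_{k+1}^{q^k})$. $\mathcal{L}_q(x,\mathbb{F}_{q^m})$ is the set of $q$-linearized polynomials $\sum_i a_ix^{q^i}$ over $\mathbb{F}_{q^m}$, with $q$-degree the largest $i$ with $a_i\ne0$. $d_H$ is Hamming distance, $d_H(\mathbf{u},C)=\min_{\mathbf{c}\in C}d_H(\mathbf{u},\mathbf{c})$; a deep hole in the Hamming metric is a word attaining the maximum of $d_H(\cdot,C)$, which for $\mathcal{G}$ is $n-k$. The Gabidulin code of dimension $k$ is $\mathcal{G}=\{(v(g_1),\dots,v(g_n)) : v\in\mathcal{L}_q(x,\mathbb{F}_{q^m}),\ v=0\text{ or }\deg_q(v)<k\}$. *)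

theory Defs
  imports "Jordan_Normal_Form.Determinant" "HOL-Computational_Algebra.Primes"
begin

text \<open>Words of length n are functions nat => 'a; only indices j < n matter.\<close>

definition prime_power :: "nat \<Rightarrow> bool" where
  "prime_power q \<longleftrightarrow> (\<exists>p r. prime p \<and> r \<ge> 1 \<and> q = p ^ r)"

text \<open>Linear independence of g_0..g_(n-1) over the subfield F_q = {x. x^q = x}.\<close>
definition Fq_lin_indep :: "nat \<Rightarrow> nat \<Rightarrow> (nat \<Rightarrow> 'a::field) \<Rightarrow> bool" where
  "Fq_lin_indep q n g \<longleftrightarrow>
     (\<forall>lam::nat \<Rightarrow> 'a. (\<forall>j<n. lam j ^ q = lam j) \<and> (\<Sum>j<n. lam j * g j) = 0
        \<longrightarrow> (\<forall>j<n. lam j = 0))"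

definition lin_eval :: "nat \<Rightarrow> nat \<Rightarrow> (nat \<Rightarrow> 'a::field) \<Rightarrow> 'a \<Rightarrow> 'a" where
  "lin_eval q d a x = (\<Sum>i<d. a i * x ^ (q ^ i))"

definition gabidulin :: "nat \<Rightarrow> nat \<Rightarrow> nat \<Rightarrow> (nat \<Rightarrow> 'a::field) \<Rightarrow> (nat \<Rightarrow> 'a) set" where
  "gabidulin q k n g = {(\<lambda>j. if j < n then lin_eval q k a (g j) else 0) | a. True}"

definition hamming :: "nat \<Rightarrow> (nat \<Rightarrow> 'a) \<Rightarrow> (nat \<Rightarrow> 'a) \<Rightarrow> nat" where
  "hamming n u v = card {j. j < n \<and> u j \<noteq> v j}"

definition hamming_to_code :: "nat \<Rightarrow> (nat \<Rightarrow> 'a) \<Rightarrow> (nat \<Rightarrow> 'a) set \<Rightarrow> nat" where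
  "hamming_to_code n u C = Min ((\<lambda>c. hamming n u c) ` C)"

text \<open>Moore matrix M_t(beta_1..beta_s): entry (i,j) = beta_j^(q^i), 0-based rows.\<close>
definition moore_mat :: "nat \<Rightarrow> nat \<Rightarrow> nat \<Rightarrow> (nat \<Rightarrow> 'a::comm_ring_1) \<Rightarrow> 'a mat" where
  "moore_mat q t s \<beta> = mat t s (\<lambda>(i, j). \<beta> j ^ (q ^ i))"

text \<open>R_k(beta_1..beta_(k+1)): M_(k+2) with the row of exponent q^k deleted.\<close>
definition R_mat :: "nat \<Rightarrow> nat \<Rightarrow> (nat \<Rightarrow> 'a::comm_ring_1) \<Rightarrow> 'a mat" where
  "R_mat q k \<beta> = mat (k+1) (k+1)
     (\<lambda>(i, j). \<beta> j ^ (q ^ (if i < k then i else i + 1)))"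

end

theory Submission
  imports Defs "HOL-Number_Theory.Residues" "HOL-Computational_Algebra.Polynomial"
begin


lemma frob_q:
  fixes x y :: "'a::{finite,field}"
  assumes "prime_power q" "card (UNIV :: 'a set) = q ^ m" "m \<ge> 1"
  shows "(x + y) ^ (q ^ i) = x ^ (q ^ i) + y ^ (q ^ i)"
proof -
  obtain P r where P: "prime P" "r \<ge> 1" "q = P ^ r" using assms(1) unfolding prime_power_def by blast
  have pos: "CHAR('a) > 0" by (rule finite_imp_CHAR_pos) simp
  have pr: "prime CHAR('a)" using prime_CHAR_semidom[OF pos] .
  have "CHAR('a) dvd P ^ (r * m)" using CHAR_dvd_CARD[where 'a='a] assms(2) P(3)
    by (simp add: power_mult)
  hence "CHAR('a) dvd P" using pr prime_dvd_power by blast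
  hence eq: "CHAR('a) = P" using pr P(1) primes_dvd_imp_eq by blast
  have "q ^ i = CHAR('a) ^ (r * i)" using P(3) eq by (simp add: power_mult)
  thus ?thesis using freshmans_dream'[OF pr] by blast
qed

lemma finite_field_pow_card:
  fixes x :: "'a :: {finite,field}"
  shows   "x ^ card (UNIV :: 'a set) = x"
proof (cases "x = 0")
  case False
  have "x * (\<Prod>y\<in>UNIV-{0}. x * y) = x * x ^ (card (UNIV :: 'a set) - 1) * \<Prod>(UNIV-{0})"
    by (simp add: prod.distrib mult_ac)
  also have "x * x ^ (card (UNIV :: 'a set) - 1) = x ^ Suc (card (UNIV :: 'a set) - 1)"
    by (subst power_Suc) auto
  also have "Suc (card (UNIV :: 'a set) - 1) = card (UNIV :: 'a set)"
    using finite_UNIV_card_ge_0[where ?'a = 'a] by simp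
  also have "(\<Prod>y\<in>UNIV-{0}. x * y) = (\<Prod>y\<in>UNIV-{0}. y)"
    by (rule prod.reindex_bij_witness[of _ "\<lambda>y. y / x" "\<lambda>y. x * y"]) (use False in auto)
  finally show ?thesis
    by simp
qed (use finite_UNIV_card_ge_0[where ?'a = 'a] in auto)

lemma geom_nat: "((q::nat) - 1) * (\<Sum>i<m. q ^ i) = q ^ m - 1" if "q \<ge> 1"
proof (induction m)
  case (Suc m)
  have "q ^ m \<ge> 1" using that by simp
  have "(q - 1) * (\<Sum>i<Suc m. q ^ i) = (q ^ m - 1) + (q - 1) * q ^ m"
    using Suc by (simp add: algebra_simps)
  also have "\<dots> = q ^ Suc m - 1" using that \<open>q ^ m \<ge> 1\<close>
    by (simp add: algebra_simps diff_mult_distrib)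
  finally show ?case .
qed simp

lemma card_Fq_ge:
  fixes dummy :: "'a::{finite,field}"
  assumes "card (UNIV :: 'a set) = q ^ m" "m \<ge> 1" "q \<ge> 2"
  shows "card {x::'a. x ^ q = x} \<ge> q"
proof -
  define N where "N = (\<Sum>i<m. q ^ i)"
  have N: "(q - 1) * N = q ^ m - 1" unfolding N_def using geom_nat assms by simp
  have qm: "q \<le> q ^ m" using assms by (simp add: self_le_power)
  have N1: "N \<ge> 1"
  proof (rule ccontr)
    assume "\<not> N \<ge> 1" hence "N = 0" by simp
    hence "q ^ m - 1 = 0" using N by simp
    thus False using qm assms(3) by simp
  qed
  define S :: "'a poly" where "S = (\<Sum>j<N. Polynomial.monom 1 ((q - 1) * j))"
  have polyS: "poly S x = (\<Sum>j<N. x ^ ((q - 1) * j))" for x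
    unfolding S_def by (simp add: poly_sum poly_monom)
  have "poly S 0 = 1"
  proof -
    have "poly S 0 = (\<Sum>j\<in>{0}. (0::'a) ^ ((q - 1) * j))"
      unfolding polyS using N1 assms(3)
      by (intro sum.mono_neutral_right) (auto simp: zero_power)
    thus ?thesis by simp
  qed
  hence S0: "S \<noteq> 0" by auto
  have degS: "degree S \<le> (q - 1) * (N - 1)"
    unfolding S_def
  proof (intro degree_sum_le)
    fix j assume "j \<in> {..<N}"
    hence "(q - 1) * j \<le> (q - 1) * (N - 1)" by (intro mult_le_mono2) auto
    thus "degree (Polynomial.monom (1::'a) ((q - 1) * j)) \<le> (q - 1) * (N - 1)"
      using degree_monom_le order.trans by blast
  qed simp
  have "(q - 1) * (N - 1) = q ^ m - q" using N N1 assms(3)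
    by (simp add: diff_mult_distrib2)
  hence cS: "card {x. poly S x = 0} \<le> q ^ m - q" using card_poly_roots_bound[OF S0] degS by linarith
  have key: "x ^ q - x = 0 \<or> poly S x = 0" for x :: 'a
  proof -
    define y where "y = x ^ (q - 1)"
    have q1: "q = Suc (q - 1)" using assms(3) by simp
    have xq: "x ^ q = x * y" unfolding y_def by (subst q1) simp
    have ps: "poly S x = (\<Sum>j<N. y ^ j)" unfolding polyS y_def by (simp add: power_mult)
    have "(x ^ q - x) * poly S x = x * ((y - 1) * (\<Sum>j<N. y ^ j))"
      unfolding ps xq by (simp add: algebra_simps)
    also have "\<dots> = x * (y ^ N - 1)" by (simp add: power_diff_1_eq)
    also have "y ^ N = x ^ (q ^ m - 1)" unfolding y_def N[symmetric] by (simp add: power_mult)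
    also have "x * (x ^ (q ^ m - 1) - 1) = x * x ^ (q ^ m - 1) - x" by (simp add: algebra_simps)
    also have "x * x ^ (q ^ m - 1) = x ^ Suc (q ^ m - 1)" by simp
    also have "Suc (q ^ m - 1) = q ^ m" using qm assms(3) by simp
    also have "x ^ (q ^ m) = x" using finite_field_pow_card[of x] assms(1) by simp
    finally show ?thesis by simp
  qed
  have "UNIV = {x::'a. x ^ q = x} \<union> {x. poly S x = 0}" using key by auto
  hence "q ^ m \<le> card {x::'a. x ^ q = x} + card {x. poly S x = 0}"
    using card_Un_le assms(1) by metis
  thus ?thesis using cS qm by linarith
qed



lemma lin_roots_bound:
  fixes lam :: "nat \<Rightarrow> 'a::field"
  assumes "q \<ge> 2" "i0 < t" "lam i0 \<noteq> 0"
  shows "card {x. (\<Sum>i<t. lam i * x ^ (q ^ i)) = 0} \<le> q ^ (t - 1)"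
proof -
  define P where "P = (\<Sum>i<t. Polynomial.monom (lam i) (q ^ i))"
  have pP: "poly P x = (\<Sum>i<t. lam i * x ^ (q ^ i))" for x
    unfolding P_def by (simp add: poly_sum poly_monom)
  have inj: "(q ^ i = q ^ i0) = (i = i0)" for i using assms(1) by (simp add: power_inject_exp)
  have "Polynomial.coeff P (q ^ i0) = (\<Sum>i<t. if i = i0 then lam i else 0)"
    unfolding P_def Polynomial.coeff_sum Polynomial.coeff_monom inj by simp
  also have "\<dots> = lam i0" using assms(2) by simp
  finally have "P \<noteq> 0" using assms(3) by auto
  moreover have "degree P \<le> q ^ (t - 1)"
    unfolding P_def
  proof (intro degree_sum_le)
    fix i assume "i \<in> {..<t}"
    hence "q ^ i \<le> q ^ (t - 1)" using assms(1) by (intro power_increasing) auto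
    thus "degree (Polynomial.monom (lam i) (q ^ i)) \<le> q ^ (t - 1)"
      using degree_monom_le order.trans by blast
  qed simp
  ultimately show ?thesis using card_poly_roots_bound[of P] unfolding pP by simp
qed

lemma frob_sub:
  assumes frob: "\<And>x y :: 'a::field. (x + y) ^ N = x ^ N + y ^ N"
  shows "((x::'a) - y) ^ N = x ^ N - y ^ N"
  using frob[of "x - y" y] by (simp add: algebra_simps)

lemma frob_sum:
  assumes frob: "\<And>x y :: 'a::field. (x + y) ^ N = x ^ N + y ^ N" and "N > 0"
  shows "(\<Sum>j\<in>A. f j :: 'a) ^ N = (\<Sum>j\<in>A. f j ^ N)"
proof (induction A rule: infinite_finite_induct)
  case (insert x F)
  thus ?case by (simp add: frob)
qed (use \<open>N > 0\<close> in auto)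

lemma fix_pow:
  assumes "(x::'a::field) ^ q = x"
  shows "x ^ (q ^ i) = x"
proof (induction i)
  case (Suc i)
  have "x ^ (q ^ Suc i) = (x ^ q) ^ (q ^ i)" by (simp add: power_mult mult.commute)
  thus ?case using assms Suc by simp
qed simp

lemma moore_nonsing:
  fixes \<beta> :: "nat \<Rightarrow> 'a::{finite,field}"
  assumes frob: "\<And>x y :: 'a. \<And>i. (x + y) ^ (q ^ i) = x ^ (q ^ i) + y ^ (q ^ i)"
    and cq: "card {x::'a. x ^ q = x} \<ge> q" and q2: "q \<ge> 2"
    and ind: "Fq_lin_indep q t \<beta>"
  shows "det (mat t t (\<lambda>(j, i). \<beta> j ^ (q ^ i))) \<noteq> 0"
proof
  define A where "A = (mat t t (\<lambda>(j, i). \<beta> j ^ (q ^ i)) :: 'a mat)"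
  assume "det (mat t t (\<lambda>(j, i). \<beta> j ^ (q ^ i))) = 0"
  hence "det A = 0" unfolding A_def .
  then obtain v where v: "v \<in> carrier_vec t" "v \<noteq> 0\<^sub>v t" "A *\<^sub>v v = 0\<^sub>v t"
    using det_0_iff_vec_prod_zero[of A t] unfolding A_def by auto
  have Lz: "(\<Sum>i<t. v $ i * \<beta> j ^ (q ^ i)) = 0" if j: "j < t" for j
  proof -
    have "(A *\<^sub>v v) $ j = 0" using v(3) j by simp
    moreover have "(A *\<^sub>v v) $ j = (\<Sum>i<t. v $ i * \<beta> j ^ (q ^ i))"
      using j v(1) unfolding A_def
      by (simp add: scalar_prod_def Matrix.row_def atLeast0LessThan mult.commute)
    ultimately show ?thesis by simp
  qed
  obtain i0 where i0: "i0 < t" "v $ i0 \<noteq> 0"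
  proof -
    have "\<exists>i<t. v $ i \<noteq> 0"
    proof (rule ccontr)
      assume "\<not> (\<exists>i<t. v $ i \<noteq> 0)"
      hence "v = 0\<^sub>v t" using v(1) by (intro eq_vecI) auto
      thus False using v(2) by simp
    qed
    thus ?thesis using that by blast
  qed
  define L where "L = (\<lambda>x::'a. \<Sum>i<t. v $ i * x ^ (q ^ i))"
  have bound: "card {x. L x = 0} \<le> q ^ (t - 1)"
    unfolding L_def using lin_roots_bound[of q i0 t "\<lambda>i. v $ i"] q2 i0 by simp
  obtain S where S: "S \<subseteq> {x::'a. x ^ q = x}" "card S = q"
    using obtain_subset_with_card_n[OF cq] by blast
  define E where "E = PiE {..<t} (\<lambda>_. S)"
  define \<phi> where "\<phi> = (\<lambda>\<mu>. \<Sum>j<t. \<mu> j * \<beta> j)"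
  have qpos: "q ^ i > 0" for i using q2 by simp
  have roots: "L (\<phi> \<mu>) = 0" if "\<mu> \<in> E" for \<mu>
  proof -
    have fix\<mu>: "\<mu> j ^ (q ^ i) = \<mu> j" if "j < t" for i j
      using \<open>\<mu> \<in> E\<close> that S(1) unfolding E_def by (intro fix_pow) (auto simp: PiE_iff)
    have "L (\<phi> \<mu>) = (\<Sum>i<t. v $ i * (\<Sum>j<t. \<mu> j * \<beta> j ^ (q ^ i)))"
      unfolding L_def \<phi>_def
      by (intro sum.cong refl arg_cong2[where f="(*)"])
         (simp add: frob_sum[OF frob qpos] power_mult_distrib fix\<mu>)
    also have "\<dots> = (\<Sum>i<t. \<Sum>j<t. v $ i * (\<mu> j * \<beta> j ^ (q ^ i)))"
      by (simp add: sum_distrib_left)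
    also have "\<dots> = (\<Sum>j<t. \<Sum>i<t. v $ i * (\<mu> j * \<beta> j ^ (q ^ i)))"
      by (rule sum.swap)
    also have "\<dots> = (\<Sum>j<t. \<mu> j * (\<Sum>i<t. v $ i * \<beta> j ^ (q ^ i)))"
      by (simp add: sum_distrib_left mult.left_commute)
    also have "\<dots> = 0" using Lz by simp
    finally show ?thesis .
  qed
  have inj: "inj_on \<phi> E"
  proof
    fix \<mu> \<mu>' assume m: "\<mu> \<in> E" "\<mu>' \<in> E" and eq: "\<phi> \<mu> = \<phi> \<mu>'"
    define lam where "lam = (\<lambda>j. \<mu> j - \<mu>' j)"
    have "(\<Sum>j<t. lam j * \<beta> j) = \<phi> \<mu> - \<phi> \<mu>'"
      unfolding lam_def \<phi>_def by (simp add: sum_subtractf left_diff_distrib)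
    hence s0: "(\<Sum>j<t. lam j * \<beta> j) = 0" using eq by simp
    have "lam j ^ q = lam j" if "j < t" for j
    proof -
      have "lam j ^ (q ^ 1) = \<mu> j ^ (q ^ 1) - \<mu>' j ^ (q ^ 1)"
        unfolding lam_def by (rule frob_sub) (rule frob)
      moreover have "\<mu> j ^ q = \<mu> j" "\<mu>' j ^ q = \<mu>' j"
        using m that S(1) unfolding E_def by (auto simp: PiE_iff)
      ultimately show ?thesis unfolding lam_def by simp
    qed
    hence "\<forall>j<t. lam j = 0" using ind s0 unfolding Fq_lin_indep_def by blast
    thus "\<mu> = \<mu>'" using m unfolding E_def lam_def by (intro PiE_ext) auto
  qed
  have cE: "card E = q ^ t" unfolding E_def by (simp add: card_PiE S(2))
  have "\<phi> ` E \<subseteq> {x. L x = 0}" using roots by auto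
  hence "card (\<phi> ` E) \<le> card {x. L x = 0}" by (intro card_mono) auto
  hence "q ^ t \<le> q ^ (t - 1)" using card_image[OF inj] cE bound by simp
  moreover have "q ^ (t - 1) < q ^ t" using q2 i0 by (intro power_strict_increasing) auto
  ultimately show False by simp
qed

lemma sum_delta_aux:
  assumes "i < (t::nat)"
  shows "(\<Sum>ia<t. (c::'a::field) * (if i = ia then 1 else 0) * w ia) = c * w i"
proof -
  have "(\<Sum>ia<t. c * (if i = ia then 1 else 0) * w ia) = (\<Sum>ia<t. if ia = i then c * w ia else 0)"
    by (intro sum.cong) auto
  thus ?thesis using assms by simp
qed

lemma solve_sys:
  fixes A :: "'a::field mat"
  assumes A: "A \<in> carrier_mat t t" "det A \<noteq> 0" and w: "w \<in> carrier_vec t"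
  shows "\<exists>x \<in> carrier_vec t. A *\<^sub>v x = w"
proof
  define x where "x = (1 / det A) \<cdot>\<^sub>v (adj_mat A *\<^sub>v w)"
  have adj: "adj_mat A \<in> carrier_mat t t" using adj_mat(1)[OF A(1)] .
  show "x \<in> carrier_vec t" unfolding x_def using adj w by simp
  have "A *\<^sub>v x = (1 / det A) \<cdot>\<^sub>v (A *\<^sub>v (adj_mat A *\<^sub>v w))"
    unfolding x_def using A adj w by (simp add: mult_mat_vec)
  also have "A *\<^sub>v (adj_mat A *\<^sub>v w) = (A * adj_mat A) *\<^sub>v w"
    using A adj w by simp
  also have "\<dots> = (det A \<cdot>\<^sub>m 1\<^sub>m t) *\<^sub>v w" using adj_mat(2)[OF A(1)] by simp
  also have "\<dots> = det A \<cdot>\<^sub>v w"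
    using w by (intro eq_vecI) (auto simp: scalar_prod_def Matrix.row_def atLeast0LessThan sum_delta_aux)
  finally show "A *\<^sub>v x = w" using A(2) w by (intro eq_vecI) auto
qed



lemma indep_sub:
  assumes ind: "Fq_lin_indep q n g" and inj: "inj_on \<iota> {..<t}"
    and sub: "\<iota> ` {..<t} \<subseteq> {..<n}" and q: "q \<ge> 1"
  shows "Fq_lin_indep q t (g \<circ> \<iota>)"
  unfolding Fq_lin_indep_def
proof (rule allI, rule impI)
  fix lam :: "nat \<Rightarrow> 'a"
  assume h: "(\<forall>j<t. lam j ^ q = lam j) \<and> (\<Sum>j<t. lam j * (g \<circ> \<iota>) j) = 0"
  define lam' where "lam' i = (if i \<in> \<iota> ` {..<t} then lam (inv_into {..<t} \<iota> i) else 0)" for i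
  have l1: "lam' (\<iota> j) = lam j" if "j < t" for j
    using that inv_into_f_f[OF inj] unfolding lam'_def by simp
  have l2: "lam' i ^ q = lam' i" for i
  proof (cases "i \<in> \<iota> ` {..<t}")
    case True
    then obtain j where "j < t" "i = \<iota> j" by auto
    thus ?thesis using l1 h by simp
  next
    case False
    thus ?thesis using q unfolding lam'_def by (simp add: zero_power)
  qed
  have "(\<Sum>i<n. lam' i * g i) = (\<Sum>i\<in>\<iota> ` {..<t}. lam' i * g i)"
    using sub by (intro sum.mono_neutral_right) (auto simp: lam'_def)
  also have "\<dots> = (\<Sum>j<t. lam' (\<iota> j) * g (\<iota> j))" by (simp add: sum.reindex[OF inj])
  also have "\<dots> = (\<Sum>j<t. lam j * g (\<iota> j))" using l1 by simp
  also have "\<dots> = 0" using h by simp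
  finally have "\<forall>i<n. lam' i = 0" using ind l2 unfolding Fq_lin_indep_def by blast
  thus "\<forall>j<t. lam j = 0" using l1 sub by (metis image_subset_iff lessThan_iff)
qed

lemma Amul:
  fixes \<beta> :: "nat \<Rightarrow> 'a::field"
  assumes "x \<in> carrier_vec t" "j < t"
  shows "(mat t t (\<lambda>(j, i). \<beta> j ^ (q ^ i)) *\<^sub>v x) $ j = (\<Sum>i<t. x $ i * \<beta> j ^ (q ^ i))"
proof -
  have "(mat t t (\<lambda>(j, i). \<beta> j ^ (q ^ i)) *\<^sub>v x) $ j = (\<Sum>i<t. \<beta> j ^ (q ^ i) * x $ i)"
    using assms by (simp add: scalar_prod_def Matrix.row_def atLeast0LessThan)
  also have "\<dots> = (\<Sum>i<t. x $ i * \<beta> j ^ (q ^ i))"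
    by (intro sum.cong refl) (rule mult.commute)
  finally show ?thesis .
qed

lemma cramer_a1:
  fixes \<beta> :: "nat \<Rightarrow> 'a::field"
  assumes dA: "det (mat (k+1) (k+1) (\<lambda>(j, i). \<beta> j ^ (q ^ i))) \<noteq> 0"
  shows "det (moore_mat q (k+1) (k+1) \<beta>) \<noteq> 0"
    "(\<exists>y. (\<forall>j\<le>k. (\<Sum>i<k+1. y i * \<beta> j ^ (q ^ i)) = \<beta> j ^ (q ^ (k+1))) \<and> y k = a1)
     \<longleftrightarrow> a1 = det (R_mat q k \<beta>) / det (moore_mat q (k+1) (k+1) \<beta>)"
proof -
  define A where "A = (mat (k+1) (k+1) (\<lambda>(j, i). \<beta> j ^ (q ^ i)) :: 'a mat)"
  define w where "w = vec (k+1) (\<lambda>j. \<beta> j ^ (q ^ (k+1)))"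
  have Ac: "A \<in> carrier_mat (k+1) (k+1)" unfolding A_def by simp
  have wc: "w \<in> carrier_vec (k+1)" unfolding w_def by simp
  have "A = transpose_mat (moore_mat q (k+1) (k+1) \<beta>)"
    unfolding A_def moore_mat_def by (intro eq_matI) auto
  hence dM: "det (moore_mat q (k+1) (k+1) \<beta>) = det A"
    using det_transpose[of "moore_mat q (k+1) (k+1) \<beta>" "k+1"] by (simp add: moore_mat_def)
  have "replace_col A w k = transpose_mat (R_mat q k \<beta>)"
    unfolding A_def R_mat_def replace_col_def w_def by (intro eq_matI) auto
  hence dR: "det (R_mat q k \<beta>) = det (replace_col A w k)"
    using det_transpose[of "R_mat q k \<beta>" "k+1"] by (simp add: R_mat_def)
  have dA': "det A \<noteq> 0" using dA unfolding A_def .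
  show "det (moore_mat q (k+1) (k+1) \<beta>) \<noteq> 0" using dM dA' by simp
  have eqs: "A *\<^sub>v x = w \<longleftrightarrow> (\<forall>j\<le>k. (\<Sum>i<k+1. x $ i * \<beta> j ^ (q ^ i)) = \<beta> j ^ (q ^ (k+1)))"
    if x: "x \<in> carrier_vec (k+1)" for x
  proof
    assume "A *\<^sub>v x = w"
    thus "\<forall>j\<le>k. (\<Sum>i<k+1. x $ i * \<beta> j ^ (q ^ i)) = \<beta> j ^ (q ^ (k+1))"
      using Amul[OF x, of _ \<beta> q] unfolding A_def w_def
      by (metis (no_types, lifting) index_vec less_Suc_eq_le Suc_eq_plus1)
  next
    assume h: "\<forall>j\<le>k. (\<Sum>i<k+1. x $ i * \<beta> j ^ (q ^ i)) = \<beta> j ^ (q ^ (k+1))"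
    show "A *\<^sub>v x = w"
    proof (rule eq_vecI)
      fix j assume "j < dim_vec w"
      hence j: "j < k + 1" unfolding w_def by simp
      show "(A *\<^sub>v x) $ j = w $ j"
        using Amul[OF x j, of \<beta> q] h j unfolding A_def w_def by simp
    qed (simp add: A_def w_def)
  qed
  show "(\<exists>y. (\<forall>j\<le>k. (\<Sum>i<k+1. y i * \<beta> j ^ (q ^ i)) = \<beta> j ^ (q ^ (k+1))) \<and> y k = a1)
     \<longleftrightarrow> a1 = det (R_mat q k \<beta>) / det (moore_mat q (k+1) (k+1) \<beta>)"
  proof
    assume "\<exists>y. (\<forall>j\<le>k. (\<Sum>i<k+1. y i * \<beta> j ^ (q ^ i)) = \<beta> j ^ (q ^ (k+1))) \<and> y k = a1"
    then obtain y where y: "\<forall>j\<le>k. (\<Sum>i<k+1. y i * \<beta> j ^ (q ^ i)) = \<beta> j ^ (q ^ (k+1))" "y k = a1"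
      by blast
    define x where "x = vec (k+1) y"
    have xc: "x \<in> carrier_vec (k+1)" unfolding x_def by simp
    have "(\<forall>j\<le>k. (\<Sum>i<k+1. x $ i * \<beta> j ^ (q ^ i)) = \<beta> j ^ (q ^ (k+1)))"
      using y(1) unfolding x_def by simp
    hence Ax: "A *\<^sub>v x = w" using eqs[OF xc] by simp
    have "det (replace_col A (A *\<^sub>v x) k) = x $ k * det A"
      by (rule cramer_lemma_mat[OF Ac xc]) simp
    hence "det (R_mat q k \<beta>) = a1 * det (moore_mat q (k+1) (k+1) \<beta>)"
      using Ax dR dM y(2) unfolding x_def by simp
    thus "a1 = det (R_mat q k \<beta>) / det (moore_mat q (k+1) (k+1) \<beta>)"
      using dM dA' by (simp add: field_simps)
  next
    assume a1: "a1 = det (R_mat q k \<beta>) / det (moore_mat q (k+1) (k+1) \<beta>)"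
    obtain x where xc: "x \<in> carrier_vec (k+1)" and Ax: "A *\<^sub>v x = w"
      using solve_sys[OF Ac dA' wc] by blast
    have "det (replace_col A (A *\<^sub>v x) k) = x $ k * det A"
      by (rule cramer_lemma_mat[OF Ac xc]) simp
    hence "x $ k = a1" using Ax dR dM dA' a1 by (simp add: field_simps)
    moreover have "\<forall>j\<le>k. (\<Sum>i<k+1. x $ i * \<beta> j ^ (q ^ i)) = \<beta> j ^ (q ^ (k+1))"
      using eqs[OF xc] Ax by simp
    ultimately show "\<exists>y. (\<forall>j\<le>k. (\<Sum>i<k+1. y i * \<beta> j ^ (q ^ i)) = \<beta> j ^ (q ^ (k+1))) \<and> y k = a1"
      by (intro exI[of _ "\<lambda>i. x $ i"]) simp
  qed
qed



theorem lemma4: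
  fixes q m n k :: nat
    and g :: "nat \<Rightarrow> 'a::{finite, field}"
    and a1 :: 'a and c :: "nat \<Rightarrow> 'a"
  assumes "prime_power q"
    and "card (UNIV :: 'a set) = q ^ m"
    and "1 \<le> k" and "k + 1 < n" and "n \<le> m"
    and "Fq_lin_indep q n g"
  defines "f \<equiv> (\<lambda>x::'a. x ^ (q ^ (k+1)) - a1 * x ^ (q ^ k) + (\<Sum>i<k. c i * x ^ (q ^ i)))"
  defines "\<sigma> \<equiv> (\<lambda>j. if j < n then f (g j) else 0)"
  shows "hamming_to_code n \<sigma> (gabidulin q k n g) \<noteq> n - k \<longleftrightarrow>
    (\<exists>\<iota>::nat \<Rightarrow> nat. inj_on \<iota> {..k} \<and> \<iota> ` {..k} \<subseteq> {..<n} \<and>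
       a1 = det (R_mat q k (g \<circ> \<iota>)) / det (moore_mat q (k+1) (k+1) (g \<circ> \<iota>)))"
proof -
  have m1: "m \<ge> 1" using assms(4,5) by simp
  obtain P r where P: "prime P" "r \<ge> 1" "q = P ^ r" using assms(1) unfolding prime_power_def by blast
  have "P \<ge> 2" using P(1) prime_ge_2_nat by blast
  hence q2: "q \<ge> 2" using P(2,3)
    by (metis le_trans one_le_power power_one_right power_increasing dual_order.trans
        one_le_numeral order.refl)
  note frob = frob_q[OF assms(1) assms(2) m1]
  note cq = card_Fq_ge[OF assms(2) m1 q2]
  note moore = moore_nonsing[OF frob cq q2]
  define cw where "cw a = (\<lambda>j. if j < n then lin_eval q k a (g j) else 0)" for a
  have G: "gabidulin q k n g = range cw" unfolding gabidulin_def cw_def by auto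
  define Z where "Z a = {j. j < n \<and> f (g j) = lin_eval q k a (g j)}" for a
  have Zsub: "Z a \<subseteq> {..<n}" for a unfolding Z_def by auto
  have Zfin: "finite (Z a)" for a using Zsub finite_subset by blast
  have cZ: "card (Z a) \<le> n" for a using card_mono[OF _ Zsub] by simp
  have ham: "hamming n \<sigma> (cw a) = n - card (Z a)" for a
  proof -
    have "{j. j < n \<and> \<sigma> j \<noteq> cw a j} = {..<n} - Z a"
      unfolding Z_def \<sigma>_def cw_def by auto
    thus ?thesis unfolding hamming_def using card_Diff_subset[OF Zfin Zsub] by simp
  qed
  define V where "V = range (\<lambda>a. n - card (Z a))"
  have HV: "hamming_to_code n \<sigma> (gabidulin q k n g) = Min V"
    unfolding hamming_to_code_def G V_def image_image ham ..
  have Vfin: "finite V" unfolding V_def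
    by (rule finite_subset[of _ "{..n}"]) auto
  have Vne: "V \<noteq> {}" unfolding V_def by simp
  \<comment> \<open>K1: interpolation at k points\<close>
  obtain a0 where a0: "card (Z a0) \<ge> k"
  proof -
    have "Fq_lin_indep q k (g \<circ> id)"
      using assms(4) q2 by (intro indep_sub[OF assms(6)]) auto
    hence dk: "det (mat k k (\<lambda>(j, i). g j ^ (q ^ i))) \<noteq> 0" using moore[of k g] by simp
    define w where "w = vec k (\<lambda>j. f (g j))"
    obtain x where xc: "x \<in> carrier_vec k" and Ax: "mat k k (\<lambda>(j, i). g j ^ (q ^ i)) *\<^sub>v x = w"
      using solve_sys[OF _ dk, where w=w] unfolding w_def by auto
    define a where "a = (\<lambda>i. x $ i)"
    have "{..<k} \<subseteq> Z a"
    proof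
      fix j assume "j \<in> {..<k}"
      hence j: "j < k" by simp
      have "lin_eval q k a (g j) = (\<Sum>i<k. x $ i * g j ^ (q ^ i))"
        unfolding lin_eval_def a_def ..
      also have "\<dots> = f (g j)" using Amul[OF xc j, of g q] Ax j unfolding w_def by simp
      finally show "j \<in> Z a" unfolding Z_def using j assms(4) by simp
    qed
    hence "card {..<k} \<le> card (Z a)" using Zfin by (intro card_mono) auto
    thus ?thesis using that by simp
  qed
  have K2: "(\<exists>a. card (Z a) \<ge> k + 1) \<longleftrightarrow>
    (\<exists>\<iota>::nat \<Rightarrow> nat. inj_on \<iota> {..k} \<and> \<iota> ` {..k} \<subseteq> {..<n} \<and>
       a1 = det (R_mat q k (g \<circ> \<iota>)) / det (moore_mat q (k+1) (k+1) (g \<circ> \<iota>)))"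
  proof
    assume "\<exists>a. card (Z a) \<ge> k + 1"
    then obtain a where a: "card (Z a) \<ge> k + 1" by blast
    obtain S where S: "S \<subseteq> Z a" "card S = k + 1"
      using obtain_subset_with_card_n[OF a] by blast
    have Sfin: "finite S" using S Zfin finite_subset by blast
    obtain \<iota> where bij: "bij_betw \<iota> {0..<card S} S" using ex_bij_betw_nat_finite[OF Sfin] by blast
    have kk: "{0..<card S} = {..k}" "{..<k+1} = {..k}" using S(2) by auto
    have inj: "inj_on \<iota> {..k}" and im: "\<iota> ` {..k} = S"
      using bij kk unfolding bij_betw_def by auto
    have sub: "\<iota> ` {..k} \<subseteq> {..<n}" using im S(1) Zsub by blast
    have ind: "Fq_lin_indep q (k+1) (g \<circ> \<iota>)"
      using inj sub q2 kk by (intro indep_sub[OF assms(6)]) auto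
    have dA: "det (mat (k+1) (k+1) (\<lambda>(j, i). (g \<circ> \<iota>) j ^ (q ^ i))) \<noteq> 0" by (rule moore[OF ind])
    define y where "y i = (if i = k then a1 else a i - c i)" for i
    have "\<forall>j\<le>k. (\<Sum>i<k+1. y i * (g \<circ> \<iota>) j ^ (q ^ i)) = (g \<circ> \<iota>) j ^ (q ^ (k+1))"
    proof (intro allI impI)
      fix j assume "j \<le> k"
      hence "\<iota> j \<in> Z a" using im S(1) by blast
      hence fz: "f (g (\<iota> j)) = lin_eval q k a (g (\<iota> j))" unfolding Z_def by simp
      define b where "b = g (\<iota> j)"
      have "(\<Sum>i<k+1. y i * b ^ (q ^ i)) = (\<Sum>i<k. (a i - c i) * b ^ (q ^ i)) + a1 * b ^ (q ^ k)"
        by (simp add: y_def)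
      also have "(\<Sum>i<k. (a i - c i) * b ^ (q ^ i)) = lin_eval q k a b - (\<Sum>i<k. c i * b ^ (q ^ i))"
        unfolding lin_eval_def by (simp add: sum_subtractf left_diff_distrib)
      also have "lin_eval q k a b = f b" using fz unfolding b_def by simp
      finally show "(\<Sum>i<k+1. y i * (g \<circ> \<iota>) j ^ (q ^ i)) = (g \<circ> \<iota>) j ^ (q ^ (k+1))"
        unfolding f_def b_def by simp
    qed
    moreover have "y k = a1" unfolding y_def by simp
    ultimately have "a1 = det (R_mat q k (g \<circ> \<iota>)) / det (moore_mat q (k+1) (k+1) (g \<circ> \<iota>))"
      using cramer_a1(2)[OF dA, of a1] by blast
    thus "\<exists>\<iota>::nat \<Rightarrow> nat. inj_on \<iota> {..k} \<and> \<iota> ` {..k} \<subseteq> {..<n} \<and>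
       a1 = det (R_mat q k (g \<circ> \<iota>)) / det (moore_mat q (k+1) (k+1) (g \<circ> \<iota>))"
      using inj sub by blast
  next
    assume "\<exists>\<iota>::nat \<Rightarrow> nat. inj_on \<iota> {..k} \<and> \<iota> ` {..k} \<subseteq> {..<n} \<and>
       a1 = det (R_mat q k (g \<circ> \<iota>)) / det (moore_mat q (k+1) (k+1) (g \<circ> \<iota>))"
    then obtain \<iota> where inj: "inj_on \<iota> {..k}" and sub: "\<iota> ` {..k} \<subseteq> {..<n}"
      and a1: "a1 = det (R_mat q k (g \<circ> \<iota>)) / det (moore_mat q (k+1) (k+1) (g \<circ> \<iota>))" by blast
    have kk: "{..<k+1} = {..k}" by auto
    have ind: "Fq_lin_indep q (k+1) (g \<circ> \<iota>)"
      using inj sub q2 kk by (intro indep_sub[OF assms(6)]) auto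
    have dA: "det (mat (k+1) (k+1) (\<lambda>(j, i). (g \<circ> \<iota>) j ^ (q ^ i))) \<noteq> 0" by (rule moore[OF ind])
    obtain y where y: "\<forall>j\<le>k. (\<Sum>i<k+1. y i * (g \<circ> \<iota>) j ^ (q ^ i)) = (g \<circ> \<iota>) j ^ (q ^ (k+1))"
      "y k = a1" using cramer_a1(2)[OF dA, of a1] a1 by blast
    define a where "a i = y i + c i" for i
    have "\<iota> ` {..k} \<subseteq> Z a"
    proof
      fix u assume "u \<in> \<iota> ` {..k}"
      then obtain j where j: "j \<le> k" "u = \<iota> j" by auto
      define b where "b = g (\<iota> j)"
      have e: "(\<Sum>i<k+1. y i * b ^ (q ^ i)) = b ^ (q ^ (k+1))" using y(1) j unfolding b_def by simp
      have "lin_eval q k a b = (\<Sum>i<k. y i * b ^ (q ^ i)) + (\<Sum>i<k. c i * b ^ (q ^ i))"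
        unfolding lin_eval_def a_def by (simp add: sum.distrib distrib_right)
      also have "(\<Sum>i<k. y i * b ^ (q ^ i)) = b ^ (q ^ (k+1)) - a1 * b ^ (q ^ k)"
        using e y(2) by (simp add: eq_diff_eq)
      finally have "lin_eval q k a b = f b" unfolding f_def by simp
      moreover have "u < n" using sub j by auto
      ultimately show "u \<in> Z a" unfolding Z_def j(2) b_def by simp
    qed
    hence "card (\<iota> ` {..k}) \<le> card (Z a)" using Zfin by (intro card_mono) auto
    hence "card (Z a) \<ge> k + 1" using card_image[OF inj] by simp
    thus "\<exists>a. card (Z a) \<ge> k + 1" by blast
  qed
  have "Min V \<le> n - card (Z a0)" using Vfin unfolding V_def by (intro Min_le) auto
  hence Mle: "Min V \<le> n - k" using a0 by linarith
  have "Min V \<noteq> n - k \<longleftrightarrow> (\<exists>a. card (Z a) \<ge> k + 1)"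
  proof
    assume "Min V \<noteq> n - k"
    hence lt: "Min V < n - k" using Mle by simp
    have "Min V \<in> V" using Min_in[OF Vfin Vne] .
    then obtain a where "Min V = n - card (Z a)" unfolding V_def by blast
    hence "card (Z a) \<ge> k + 1" using lt cZ[of a] by linarith
    thus "\<exists>a. card (Z a) \<ge> k + 1" by blast
  next
    assume "\<exists>a. card (Z a) \<ge> k + 1"
    then obtain a where a: "card (Z a) \<ge> k + 1" by blast
    have "Min V \<le> n - card (Z a)" using Vfin unfolding V_def by (intro Min_le) auto
    thus "Min V \<noteq> n - k" using a cZ[of a] assms(4) by linarith
  qed
  thus ?thesis using HV K2 by simp
qed


end
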